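(* Let $\mathbf{z}_1,\ldots,\mathbf{z}_n\in\mathbb{R}^d$ satisfy $\|\mathbf{z}_i\|_2\le1$ for all $i\in[n]$ and $\mathbf{0}\in\mathrm{conv}(\mathbf{z}_1,\ldots,\mathbf{z}_n)$. Then $\big\|\frac1n\sum_{i=1}^n\mathbf{z}_i\big\|_2\le1-\frac1n$.
   Context: $\mathrm{conv}$ denotes the convex hull. *)

theory Defs
  imports "HOL-Analysis.Analysis"
begin

end

theory Submission
  imports Defs
begin

theorem lemma3p10:
  fixes z :: "nat \<Rightarrow> real ^ 'd" and n :: nat
  assumes "\<And>i. i \<in> {1..n} \<Longrightarrow> norm (z i) \<le> 1"
    and "0 \<in> convex hull (z ` {1..n})"
  shows "norm ((1 / real n) *\<^sub>R (\<Sum>i=1..n. z i)) \<le> 1 - 1 / real n"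
proof -
  define S where "S = z ` {1..n}"
  have fin: "finite S" unfolding S_def by simp
  obtain u where u0: "\<forall>x\<in>S. 0 \<le> u x" and u1: "sum u S = 1"
    and uy: "(\<Sum>x\<in>S. u x *\<^sub>R x) = 0"
    using assms(2) unfolding S_def[symmetric] convex_hull_finite[OF fin] by blast
  have n0: "n > 0"
  proof (rule ccontr)
    assume "\<not> n > 0" then have "S = {}" unfolding S_def by auto
    then show False using u1 by simp
  qed
  define c where "c x = real (card {i\<in>{1..n}. z i = x})" for x
  have sumz: "(\<Sum>i=1..n. z i) = (\<Sum>x\<in>S. c x *\<^sub>R x)"
  proof -
    have "(\<Sum>i=1..n. z i) = (\<Sum>x\<in>S. \<Sum>i\<in>{i\<in>{1..n}. z i = x}. z i)"
      unfolding S_def by (rule sum.image_gen) simp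
    also have "\<dots> = (\<Sum>x\<in>S. c x *\<^sub>R x)"
      by (rule sum.cong) (auto simp: c_def sum_constant_scaleR simp del: sum_constant)
    finally show ?thesis .
  qed
  have sumc: "sum c S = real n"
  proof -
    have "real n = (\<Sum>i=1..n. (1::real))" by simp
    also have "\<dots> = (\<Sum>x\<in>S. \<Sum>i\<in>{i\<in>{1..n}. z i = x}. (1::real))"
      unfolding S_def by (rule sum.image_gen) simp
    also have "\<dots> = sum c S"
      by (rule sum.cong) (auto simp: c_def)
    finally show ?thesis by simp
  qed
  have c1: "c x \<ge> 1" if xS: "x \<in> S" for x
  proof -
    obtain i where "i \<in> {1..n}" "z i = x" using xS unfolding S_def by blast
    then have "{i\<in>{1..n}. z i = x} \<noteq> {}" by auto
    then have "card {i\<in>{1..n}. z i = x} \<noteq> 0" by simp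
    then have "real (card {i\<in>{1..n}. z i = x}) \<ge> 1" by linarith
    then show ?thesis unfolding c_def by assumption
  qed
  have ule: "u x \<le> 1" if "x \<in> S" for x
  proof -
    have "u x \<le> sum u S" using fin that u0 by (intro member_le_sum) auto
    then show ?thesis using u1 by simp
  qed
  have nx: "norm x \<le> 1" if "x \<in> S" for x
    using that assms(1) unfolding S_def by auto
  define w where "w x = (c x - u x) / real n" for x
  have w0: "w x \<ge> 0" if "x \<in> S" for x
    using c1[OF that] ule[OF that] n0 unfolding w_def by simp
  have eq: "(1 / real n) *\<^sub>R (\<Sum>i=1..n. z i) = (\<Sum>x\<in>S. w x *\<^sub>R x)"
  proof -
    have "(1 / real n) *\<^sub>R (\<Sum>i=1..n. z i)
        = (1 / real n) *\<^sub>R ((\<Sum>x\<in>S. c x *\<^sub>R x) - (\<Sum>x\<in>S. u x *\<^sub>R x))"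
      using sumz uy by simp
    also have "\<dots> = (\<Sum>x\<in>S. w x *\<^sub>R x)"
      unfolding scaleR_sum_right sum_subtractf[symmetric] scaleR_diff_right[symmetric]
      by (rule sum.cong) (simp_all add: w_def scaleR_diff_left[symmetric] divide_inverse mult.commute)
    finally show ?thesis .
  qed
  have "norm (\<Sum>x\<in>S. w x *\<^sub>R x) \<le> (\<Sum>x\<in>S. norm (w x *\<^sub>R x))"
    by (rule norm_sum)
  also have "\<dots> \<le> (\<Sum>x\<in>S. w x)"
  proof (rule sum_mono)
    fix x assume "x \<in> S"
    then show "norm (w x *\<^sub>R x) \<le> w x"
      using w0 nx by (simp add: mult_left_le)
  qed
  also have "\<dots> = (sum c S - sum u S) / real n"
    unfolding w_def sum_divide_distrib[symmetric] sum_subtractf by simp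
  also have "\<dots> = 1 - 1 / real n" using sumc u1 n0 by (simp add: field_simps)
  finally show ?thesis using eq by simp
qed

end
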